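(* Let $x_0\in\mathbb{R}\cup\{+\infty\}$, $T<x_0$, $I:=[T,x_0)$, and let $\phi_1,\phi_2\in C^1(I)$ satisfy $\phi_2(x)=o(\phi_1(x))$ as $x\to x_0$, $\phi_1(x)>0$ and $\phi_2(x)\neq0$ for all $x\in I$, and $W(\phi_1,\phi_2;x)>0$ for all $x\in I$. Define on $I$ $$\overline\psi_1:=\phi_1,\quad \overline\psi_2(x):=\phi_1(x)\int_T^x\Big(\frac{\phi_2(t)}{\phi_1(t)}\Big)'dt;\qquad \overline{\overline\psi}_1:=|\phi_2|,\quad \overline{\overline\psi}_2(x):=-|\phi_2(x)|\int_T^x\Big(\frac{\phi_1(t)}{\phi_2(t)}\Big)'dt.$$ Then each of the pairs $(\overline\psi_1,\overline\psi_2)$ and $(\overline{\overline\psi}_1,\overline{\overline\psi}_2)$ consists of $C^1(I)$ functions with positive first component and positive Wronskian on $I$, and $$f\in\mathcal{C}(\phi_1,\phi_2;I)\iff f\in\mathcal{C}(\overline\psi_1,\overline\psi_2;I)\iff f\in\mathcal{C}(\overline{\overline\psi}_1,\overline{\overline\psi}_2;I).$$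
   Context: $W(g,h;x):=g(x)h'(x)-g'(x)h(x)$. For continuous $\psi_1,\psi_2$ on an interval $J$, $f:J\to\mathbb{R}$ belongs to $\mathcal{C}(\psi_1,\psi_2;J)$ iff for all $t_1<t_2<t_3$ in $J$ $$\det\begin{pmatrix}\psi_1(t_1)&\psi_1(t_2)&\psi_1(t_3)\\ \psi_2(t_1)&\psi_2(t_2)&\psi_2(t_3)\\ f(t_1)&f(t_2)&f(t_3)\end{pmatrix}\ge0.$$ *)

theory Defs
  imports "HOL-Analysis.Analysis" "HOL-Library.Landau_Symbols"
begin

definition half_open_ivl :: "real \<Rightarrow> ereal \<Rightarrow> real set" where
  "half_open_ivl T x0 = {x. T \<le> x \<and> ereal x < x0}"

definition to_x0 :: "ereal \<Rightarrow> real filter" where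
  "to_x0 x0 = (if x0 = \<infinity> then at_top else at_left (real_of_ereal x0))"

definition C1_with_deriv :: "real set \<Rightarrow> (real \<Rightarrow> real) \<Rightarrow> (real \<Rightarrow> real) \<Rightarrow> bool" where
  "C1_with_deriv J f f' \<longleftrightarrow>
     (\<forall>x\<in>J. (f has_real_derivative f' x) (at x within J)) \<and> continuous_on J f'"

definition wronskian :: "(real \<Rightarrow> real) \<Rightarrow> (real \<Rightarrow> real) \<Rightarrow> (real \<Rightarrow> real) \<Rightarrow> (real \<Rightarrow> real) \<Rightarrow> real \<Rightarrow> real" where
  "wronskian g h g' h' x = g x * h' x - g' x * h x"

definition classC :: "(real \<Rightarrow> real) \<Rightarrow> (real \<Rightarrow> real) \<Rightarrow> real set \<Rightarrow> (real \<Rightarrow> real) \<Rightarrow> bool" where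
  "classC \<psi>1 \<psi>2 J f \<longleftrightarrow>
     (\<forall>t1\<in>J. \<forall>t2\<in>J. \<forall>t3\<in>J. t1 < t2 \<and> t2 < t3 \<longrightarrow>
        det (vector [vector [\<psi>1 t1, \<psi>1 t2, \<psi>1 t3],
                     vector [\<psi>2 t1, \<psi>2 t2, \<psi>2 t3],
                     vector [f t1, f t2, f t3]] :: real^3^3) \<ge> 0)"

end

theory Submission
  imports Defs
begin


lemma det_rows3:
  "det (vector [vector [a1, a2, a3], vector [b1, b2, b3], vector [c1, c2, c3]] :: real^3^3)
   = a1*b2*c3 + a2*b3*c1 + a3*b1*c2 - a1*b3*c2 - a2*b1*c3 - a3*b2*c1"
  by (simp add: det_3 vector_3)

lemma classC_lin:
  assumes q1: "\<forall>t\<in>J. q1 t = a*p1 t + b*p2 t" and q2: "\<forall>t\<in>J. q2 t = c*p1 t + d*p2 t"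
    and ad: "a*d - b*c = 1"
  shows "classC q1 q2 J f = classC p1 p2 J f"
proof -
  have "\<And>t1 t2 t3. t1\<in>J \<Longrightarrow> t2\<in>J \<Longrightarrow> t3\<in>J \<Longrightarrow>
     det (vector [vector [q1 t1, q1 t2, q1 t3], vector [q2 t1, q2 t2, q2 t3], vector [f t1, f t2, f t3]] :: real^3^3)
   = det (vector [vector [p1 t1, p1 t2, p1 t3], vector [p2 t1, p2 t2, p2 t3], vector [f t1, f t2, f t3]] :: real^3^3)"
  proof -
    fix t1 t2 t3 assume "t1\<in>J" "t2\<in>J" "t3\<in>J"
    then have e: "q1 t1 = a*p1 t1 + b*p2 t1" "q1 t2 = a*p1 t2 + b*p2 t2" "q1 t3 = a*p1 t3 + b*p2 t3"
      "q2 t1 = c*p1 t1 + d*p2 t1" "q2 t2 = c*p1 t2 + d*p2 t2" "q2 t3 = c*p1 t3 + d*p2 t3"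
      using q1 q2 by auto
    have "det (vector [vector [q1 t1, q1 t2, q1 t3], vector [q2 t1, q2 t2, q2 t3], vector [f t1, f t2, f t3]] :: real^3^3)
      = (a*d - b*c) * det (vector [vector [p1 t1, p1 t2, p1 t3], vector [p2 t1, p2 t2, p2 t3], vector [f t1, f t2, f t3]] :: real^3^3)"
      unfolding det_rows3 e by (simp add: algebra_simps)
    then show "?thesis t1 t2 t3" using ad by simp
  qed
  then show ?thesis unfolding classC_def by auto
qed

lemma C1_lin:
  assumes "C1_with_deriv J p1 p1'" "C1_with_deriv J p2 p2'" "\<forall>t\<in>J. q t = a*p1 t + b*p2 t"
  shows "C1_with_deriv J q (\<lambda>t. a*p1' t + b*p2' t)"
  unfolding C1_with_deriv_def
proof (intro conjI ballI)
  fix x assume x: "x \<in> J"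
  have "((\<lambda>t. a*p1 t + b*p2 t) has_real_derivative a*p1' x + b*p2' x) (at x within J)"
    using assms(1,2) x unfolding C1_with_deriv_def
    by (auto intro!: derivative_eq_intros)
  then show "(q has_real_derivative a*p1' x + b*p2' x) (at x within J)"
    by (rule has_field_derivative_transform_within[where d=1]) (use x assms(3) in auto)
next
  show "continuous_on J (\<lambda>t. a*p1' t + b*p2' t)"
    using assms(1,2) unfolding C1_with_deriv_def by (auto intro!: continuous_intros)
qed

lemma wr_lin:
  assumes "\<forall>t\<in>J. q1 t = a*p1 t + b*p2 t" "\<forall>t\<in>J. q2 t = c*p1 t + d*p2 t" "a*d - b*c = 1" "x \<in> J"
  shows "wronskian q1 q2 (\<lambda>t. a*p1' t + b*p2' t) (\<lambda>t. c*p1' t + d*p2' t) x = wronskian p1 p2 p1' p2' x"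
proof -
  have "wronskian q1 q2 (\<lambda>t. a*p1' t + b*p2' t) (\<lambda>t. c*p1' t + d*p2' t) x
     = (a*d - b*c) * wronskian p1 p2 p1' p2' x"
    using assms(1,2,4) unfolding wronskian_def by (simp add: algebra_simps)
  then show ?thesis using assms(3) by simp
qed

lemma ivl_sub: "x \<in> half_open_ivl T x0 \<Longrightarrow> {T..x} \<subseteq> half_open_ivl T x0"
  unfolding half_open_ivl_def by auto (meson ereal_less_eq(3) le_less_trans)

lemma ftc_I:
  assumes d: "\<forall>y\<in>half_open_ivl T x0. (g has_real_derivative g' y) (at y within half_open_ivl T x0)"
    and x: "x \<in> half_open_ivl T x0"
  shows "integral {T..x} (deriv g) = g x - g T"
proof -
  let ?I = "half_open_ivl T x0"
  have sub: "{T..x} \<subseteq> ?I" using ivl_sub[OF x] .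
  have "continuous_on ?I g"
    unfolding continuous_on_eq_continuous_within using d DERIV_continuous by blast
  then have c: "continuous_on {T..x} g" using sub continuous_on_subset by blast
  have "T \<le> x" using x unfolding half_open_ivl_def by auto
  have "(deriv g has_integral g x - g T) {T..x}"
  proof (rule fundamental_theorem_of_calculus_interior[OF \<open>T \<le> x\<close> c])
    fix t assume t: "t \<in> {T<..<x}"
    have "t \<in> ?I" using t sub by auto
    then have "(g has_real_derivative g' t) (at t within {T<..<x})"
      using d DERIV_subset[of g "g' t" t ?I "{T<..<x}"] sub by fastforce
    then have "(g has_real_derivative g' t) (at t)" using at_within_open[OF t] by simp
    moreover then have "deriv g t = g' t" by (rule DERIV_imp_deriv)
    ultimately show "(g has_vector_derivative deriv g t) (at t)"
      by (simp add: has_real_derivative_iff_has_vector_derivative)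
  qed
  then show ?thesis by (rule integral_unique)
qed

theorem lemma7p5:
  fixes T :: real and x0 :: ereal and \<phi>1 \<phi>2 \<phi>1' \<phi>2' :: "real \<Rightarrow> real"
  defines "I \<equiv> half_open_ivl T x0"
  assumes Tx0: "ereal T < x0"
    and C1_1: "C1_with_deriv I \<phi>1 \<phi>1'"
    and C1_2: "C1_with_deriv I \<phi>2 \<phi>2'"
    and small: "\<phi>2 \<in> o[to_x0 x0](\<phi>1)"
    and pos1: "\<forall>x\<in>I. \<phi>1 x > 0"
    and nz2: "\<forall>x\<in>I. \<phi>2 x \<noteq> 0"
    and W: "\<forall>x\<in>I. wronskian \<phi>1 \<phi>2 \<phi>1' \<phi>2' x > 0"
  defines "\<psi>a1 \<equiv> \<phi>1"
    and "\<psi>a2 \<equiv> (\<lambda>x. \<phi>1 x * integral {T..x} (\<lambda>t. deriv (\<lambda>s. \<phi>2 s / \<phi>1 s) t))"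
    and "\<psi>b1 \<equiv> (\<lambda>x. \<bar>\<phi>2 x\<bar>)"
    and "\<psi>b2 \<equiv> (\<lambda>x. - \<bar>\<phi>2 x\<bar> * integral {T..x} (\<lambda>t. deriv (\<lambda>s. \<phi>1 s / \<phi>2 s) t))"
  shows "(\<exists>\<psi>a1' \<psi>a2'. C1_with_deriv I \<psi>a1 \<psi>a1' \<and> C1_with_deriv I \<psi>a2 \<psi>a2' \<and>
            (\<forall>x\<in>I. \<psi>a1 x > 0 \<and> wronskian \<psi>a1 \<psi>a2 \<psi>a1' \<psi>a2' x > 0))
       \<and> (\<exists>\<psi>b1' \<psi>b2'. C1_with_deriv I \<psi>b1 \<psi>b1' \<and> C1_with_deriv I \<psi>b2 \<psi>b2' \<and>
            (\<forall>x\<in>I. \<psi>b1 x > 0 \<and> wronskian \<psi>b1 \<psi>b2 \<psi>b1' \<psi>b2' x > 0))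
       \<and> (\<forall>f. (classC \<phi>1 \<phi>2 I f \<longleftrightarrow> classC \<psi>a1 \<psi>a2 I f)
              \<and> (classC \<psi>a1 \<psi>a2 I f \<longleftrightarrow> classC \<psi>b1 \<psi>b2 I f))"
  proof -
  have TI: "T \<in> I" using Tx0 unfolding I_def half_open_ivl_def by auto
  have d1: "\<forall>y\<in>I. (\<phi>1 has_real_derivative \<phi>1' y) (at y within I)" using C1_1 unfolding C1_with_deriv_def by auto
  have d2: "\<forall>y\<in>I. (\<phi>2 has_real_derivative \<phi>2' y) (at y within I)" using C1_2 unfolding C1_with_deriv_def by auto
  have dq1: "\<forall>y\<in>I. ((\<lambda>s. \<phi>2 s / \<phi>1 s) has_real_derivative
      (\<phi>2' y * \<phi>1 y - \<phi>2 y * \<phi>1' y) / (\<phi>1 y * \<phi>1 y)) (at y within I)"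
    using d1 d2 pos1 by (auto intro!: DERIV_divide)
  have dq2: "\<forall>y\<in>I. ((\<lambda>s. \<phi>1 s / \<phi>2 s) has_real_derivative
      (\<phi>1' y * \<phi>2 y - \<phi>1 y * \<phi>2' y) / (\<phi>2 y * \<phi>2 y)) (at y within I)"
    using d1 d2 nz2 by (auto intro!: DERIV_divide)
  define c where "c = \<phi>2 T / \<phi>1 T"
  define e where "e = \<phi>1 T / \<phi>2 T"
  have ia: "\<forall>x\<in>I. \<psi>a2 x = (- c) * \<phi>1 x + 1 * \<phi>2 x"
  proof
    fix x assume x: "x \<in> I"
    have "integral {T..x} (\<lambda>t. deriv (\<lambda>s. \<phi>2 s / \<phi>1 s) t) = \<phi>2 x / \<phi>1 x - c"
      using ftc_I[of T x0 "\<lambda>s. \<phi>2 s / \<phi>1 s"] dq1 x unfolding I_def c_def by auto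
    moreover have "\<phi>1 x \<noteq> 0" using pos1 x by force
    ultimately show "\<psi>a2 x = (- c) * \<phi>1 x + 1 * \<phi>2 x"
      unfolding \<psi>a2_def by (simp add: field_simps)
  qed
  have ib: "\<forall>x\<in>I. integral {T..x} (\<lambda>t. deriv (\<lambda>s. \<phi>1 s / \<phi>2 s) t) = \<phi>1 x / \<phi>2 x - e"
    using ftc_I[of T x0 "\<lambda>s. \<phi>1 s / \<phi>2 s"] dq2 unfolding I_def e_def by auto
  have a1: "\<forall>x\<in>I. \<psi>a1 x = 1 * \<phi>1 x + 0 * \<phi>2 x" unfolding \<psi>a1_def by simp
  have A: "C1_with_deriv I \<psi>a1 (\<lambda>t. 1*\<phi>1' t + 0*\<phi>2' t) \<and> C1_with_deriv I \<psi>a2 (\<lambda>t. (-c)*\<phi>1' t + 1*\<phi>2' t)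
     \<and> (\<forall>x\<in>I. \<psi>a1 x > 0 \<and> wronskian \<psi>a1 \<psi>a2 (\<lambda>t. 1*\<phi>1' t + 0*\<phi>2' t) (\<lambda>t. (-c)*\<phi>1' t + 1*\<phi>2' t) x > 0)"
    using C1_lin[OF C1_1 C1_2 a1] C1_lin[OF C1_1 C1_2 ia] wr_lin[OF a1 ia] W pos1
    unfolding \<psi>a1_def by auto
  have CA: "\<forall>f. classC \<psi>a1 \<psi>a2 I f = classC \<phi>1 \<phi>2 I f"
    using classC_lin[OF a1 ia] by simp
  have cont2: "continuous_on I \<phi>2"
    unfolding continuous_on_eq_continuous_within using d2 DERIV_continuous by blast
  have sgn: "(\<forall>y\<in>I. \<phi>2 y > 0) \<or> (\<forall>y\<in>I. \<phi>2 y < 0)"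
  proof (cases "\<phi>2 T > 0")
    case True
    have "\<forall>y\<in>I. \<phi>2 y > 0"
    proof (rule ccontr)
      assume "\<not> ?thesis"
      then obtain y where y: "y \<in> I" "\<phi>2 y \<le> 0" by force
      have "T \<le> y" using y unfolding I_def half_open_ivl_def by auto
      moreover have "continuous_on {T..y} \<phi>2" using cont2 ivl_sub[of y T x0] y continuous_on_subset
        unfolding I_def by blast
      ultimately obtain z where "z \<ge> T" "z \<le> y" "\<phi>2 z = 0"
        using IVT2'[of \<phi>2 y 0 T] y True by auto
      moreover have "z \<in> I" using ivl_sub[of y T x0] y \<open>z \<ge> T\<close> \<open>z \<le> y\<close> unfolding I_def by auto
      ultimately show False using nz2 by auto
    qed
    then show ?thesis by blast
  next
    case False
    then have F: "\<phi>2 T < 0" using nz2 TI by force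
    have "\<forall>y\<in>I. \<phi>2 y < 0"
    proof (rule ccontr)
      assume "\<not> ?thesis"
      then obtain y where y: "y \<in> I" "\<phi>2 y \<ge> 0" by force
      have "T \<le> y" using y unfolding I_def half_open_ivl_def by auto
      moreover have "continuous_on {T..y} \<phi>2" using cont2 ivl_sub[of y T x0] y continuous_on_subset
        unfolding I_def by blast
      ultimately obtain z where "z \<ge> T" "z \<le> y" "\<phi>2 z = 0"
        using IVT'[of \<phi>2 T 0 y] y F by auto
      moreover have "z \<in> I" using ivl_sub[of y T x0] y \<open>z \<ge> T\<close> \<open>z \<le> y\<close> unfolding I_def by auto
      ultimately show False using nz2 by auto
    qed
    then show ?thesis by blast
  qed
  have B: "(\<exists>\<psi>b1' \<psi>b2'. C1_with_deriv I \<psi>b1 \<psi>b1' \<and> C1_with_deriv I \<psi>b2 \<psi>b2' \<and>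
            (\<forall>x\<in>I. \<psi>b1 x > 0 \<and> wronskian \<psi>b1 \<psi>b2 \<psi>b1' \<psi>b2' x > 0))
     \<and> (\<forall>f. classC \<psi>b1 \<psi>b2 I f = classC \<phi>1 \<phi>2 I f)"
    using sgn
  proof
    assume P: "\<forall>y\<in>I. \<phi>2 y > 0"
    have b1: "\<forall>x\<in>I. \<psi>b1 x = 0 * \<phi>1 x + 1 * \<phi>2 x" unfolding \<psi>b1_def using P by auto
    have b2: "\<forall>x\<in>I. \<psi>b2 x = (-1) * \<phi>1 x + e * \<phi>2 x"
    proof
      fix x assume x: "x \<in> I"
      have i: "integral {T..x} (\<lambda>t. deriv (\<lambda>s. \<phi>1 s / \<phi>2 s) t) = \<phi>1 x / \<phi>2 x - e"
        using ib x by auto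
      have "\<phi>2 x > 0" using P x by auto
      then show "\<psi>b2 x = (-1) * \<phi>1 x + e * \<phi>2 x"
        unfolding \<psi>b2_def i by (simp add: field_simps)
    qed
    show ?thesis
      using C1_lin[OF C1_1 C1_2 b1] C1_lin[OF C1_1 C1_2 b2] wr_lin[OF b1 b2] W nz2
        classC_lin[OF b1 b2] unfolding \<psi>b1_def by fastforce
  next
    assume N: "\<forall>y\<in>I. \<phi>2 y < 0"
    have b1: "\<forall>x\<in>I. \<psi>b1 x = 0 * \<phi>1 x + (-1) * \<phi>2 x" unfolding \<psi>b1_def using N by auto
    have b2: "\<forall>x\<in>I. \<psi>b2 x = 1 * \<phi>1 x + (-e) * \<phi>2 x"
    proof
      fix x assume x: "x \<in> I"
      have i: "integral {T..x} (\<lambda>t. deriv (\<lambda>s. \<phi>1 s / \<phi>2 s) t) = \<phi>1 x / \<phi>2 x - e"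
        using ib x by auto
      have "\<phi>2 x < 0" using N x by auto
      then show "\<psi>b2 x = 1 * \<phi>1 x + (-e) * \<phi>2 x"
        unfolding \<psi>b2_def i by (simp add: field_simps)
    qed
    show ?thesis
      using C1_lin[OF C1_1 C1_2 b1] C1_lin[OF C1_1 C1_2 b2] wr_lin[OF b1 b2] W nz2
        classC_lin[OF b1 b2] unfolding \<psi>b1_def by fastforce
  qed
  show ?thesis using A CA B by blast
qed

end
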